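(* Let $q\ge2$ and $0<\delta\le\frac{q-1}{q}$. Then $$\lim_{n\to\infty}\frac{\log_q A_q(n,2\delta n)}{n}\ge 1-(1+\delta)H_q\!\left(\frac{\delta}{1+\delta}\right)+\delta\log_q(q-1)-H_q(\delta).$$
   Context: $\Sigma_q$ is an alphabet of size $q$. The insdel distance $d(\mathbf a,\mathbf b)$ is the minimum number of single-symbol insertions and deletions needed to transform $\mathbf a$ into $\mathbf b$. The minimum insdel distance of $\mathcal{C}\subseteq\Sigma_q^n$ is the minimum of $d(\mathbf a,\mathbf b)$ over distinct $\mathbf a,\mathbf b\in\mathcal{C}$. $A_q(n,d)$ is the maximum cardinality of a code $\mathcal{C}\subseteq\Sigma_q^n$ with minimum insdel distance at least $d$. $H_q(x)=x\log_q(q-1)-x\log_qx-(1-x)\log_q(1-x)$ for $0<x<1$, $H_q(0)=H_q(1)=0$. *)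

theory Defs
  imports Complex_Main "HOL-Library.Liminf_Limsup" "HOL-Library.Extended_Real"
begin

definition words :: "nat \<Rightarrow> nat \<Rightarrow> nat list set" where
  "words q n = {w. length w = n \<and> set w \<subseteq> {0..<q}}"

definition insdel_step :: "nat \<Rightarrow> nat list \<Rightarrow> nat list \<Rightarrow> bool" where
  "insdel_step q xs ys \<longleftrightarrow> (\<exists>u v c. c < q \<and>
      ((xs = u @ v \<and> ys = u @ c # v) \<or> (xs = u @ c # v \<and> ys = u @ v)))"

definition insdel_dist :: "nat \<Rightarrow> nat list \<Rightarrow> nat list \<Rightarrow> nat" where
  "insdel_dist q a b = (LEAST k. (insdel_step q ^^ k) a b)"

definition min_dist_ge :: "nat \<Rightarrow> nat list set \<Rightarrow> real \<Rightarrow> bool" where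
  "min_dist_ge q C d \<longleftrightarrow> (\<forall>a\<in>C. \<forall>b\<in>C. a \<noteq> b \<longrightarrow> real (insdel_dist q a b) \<ge> d)"

definition A_q :: "nat \<Rightarrow> nat \<Rightarrow> real \<Rightarrow> nat" where
  "A_q q n d = Sup {card C | C. C \<subseteq> words q n \<and> min_dist_ge q C d}"

definition H_q :: "nat \<Rightarrow> real \<Rightarrow> real" where
  "H_q q x = (if 0 < x \<and> x < 1 then
      x * log q (real q - 1) - x * log q x - (1 - x) * log q (1 - x) else 0)"

end

theory Submission
  imports Defs "HOL-Library.Sublist"
begin

lemma subseq_del:
  "subseq z (u @ c # v) \<Longrightarrow> \<exists>z'. subseq z' z \<and> subseq z' (u @ v) \<and> length z \<le> length z' + 1"
proof (induction u arbitrary: z)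
  case Nil
  then show ?case
  proof (cases z)
    case Nil then show ?thesis by auto
  next
    case (Cons x zs)
    show ?thesis
    proof (cases "x = c")
      case True
      then have "subseq zs v" using Nil Cons by simp
      moreover have "subseq zs z" using Cons subseq_Cons'[of x zs z] by simp
      ultimately show ?thesis using Cons by (intro exI[of _ zs]) auto
    next
      case False
      then have "subseq z v" using Nil Cons by simp
      then show ?thesis by (intro exI[of _ z]) auto
    qed
  qed
next
  case (Cons x u)
  show ?case
  proof (cases "subseq z (u @ c # v)")
    case True
    then obtain z' where "subseq z' z" "subseq z' (u @ v)" "length z \<le> length z' + 1" using Cons.IH by blast
    then show ?thesis by auto
  next
    case False
    with Cons.prems obtain zs where z: "z = x # zs" "subseq zs (u @ c # v)"
      by (cases z) (auto split: if_splits)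
    then obtain z' where "subseq z' zs" "subseq z' (u @ v)" "length zs \<le> length z' + 1" using Cons.IH by blast
    then show ?thesis using z by (intro exI[of _ "x # z'"]) auto
  qed
qed

lemma path_subseq:
  "(insdel_step q ^^ k) a b \<Longrightarrow> \<exists>z. subseq z a \<and> subseq z b \<and> length a + length b \<le> 2 * length z + k"
proof (induction k arbitrary: b)
  case 0
  then show ?case by auto
next
  case (Suc k)
  from Suc.prems obtain b0 where p: "(insdel_step q ^^ k) a b0" and s: "insdel_step q b0 b" by auto
  from Suc.IH[OF p] obtain z where z: "subseq z a" "subseq z b0" "length a + length b0 \<le> 2 * length z + k" by blast
  from s obtain u v c where uv: "(b0 = u @ v \<and> b = u @ c # v) \<or> (b0 = u @ c # v \<and> b = u @ v)"
    unfolding insdel_step_def by blast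
  then show ?case
  proof
    assume h: "b0 = u @ v \<and> b = u @ c # v"
    have "subseq b0 b" using h by (auto simp: subseq_append' intro!: list_emb_Cons)
    then have "subseq z b" using z(2) subseq_order.order_trans by blast
    then show ?thesis using z h by (intro exI[of _ z]) auto
  next
    assume h: "b0 = u @ c # v \<and> b = u @ v"
    then obtain z' where "subseq z' z" "subseq z' b" "length z \<le> length z' + 1"
      using subseq_del[of z u c v] z(2) h by auto
    then show ?thesis using z h
      by (intro exI[of _ z']) (auto intro: subseq_order.order_trans)
  qed
qed

lemma path_to_nil: "set a \<subseteq> {0..<q} \<Longrightarrow> (insdel_step q ^^ length a) a []"
proof (induction a)
  case Nil then show ?case by simp
next
  case (Cons x a)
  have "insdel_step q (x # a) a" unfolding insdel_step_def
    using Cons.prems by (intro exI[of _ "[]"] exI[of _ a] exI[of _ x]) auto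
  moreover have "(insdel_step q ^^ length a) a []" using Cons by auto
  ultimately show ?case using relpowp_Suc_I2 by fastforce
qed

lemma path_from_nil: "set b \<subseteq> {0..<q} \<Longrightarrow> (insdel_step q ^^ length b) [] b"
proof (induction b)
  case Nil then show ?case by simp
next
  case (Cons x b)
  have "insdel_step q b (x # b)" unfolding insdel_step_def
    using Cons.prems by (intro exI[of _ "[]"] exI[of _ b] exI[of _ x]) auto
  then show ?case using Cons by (auto intro: relpowp_Suc_I)
qed

lemma dist_path:
  assumes "set a \<subseteq> {0..<q}" "set b \<subseteq> {0..<q}"
  shows "(insdel_step q ^^ insdel_dist q a b) a b"
proof -
  have "(insdel_step q ^^ (length a + length b)) a b"
    unfolding relpowp_add using path_to_nil[OF assms(1)] path_from_nil[OF assms(2)] by auto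
  then show ?thesis unfolding insdel_dist_def by (rule LeastI)
qed

lemma choose_mono_Suc: "m choose k \<le> Suc m choose k"
  by (cases k) auto

lemma central_ge: "2 ^ n \<le> (2 * n) choose n"
proof (induction n)
  case 0 then show ?case by simp
next
  case (Suc n)
  have "2 * Suc n = Suc (Suc (2 * n))" by simp
  then have e: "(2 * Suc n) choose Suc n = (Suc (2*n) choose n) + (Suc (2*n) choose Suc n)" by simp
  have "(2*n) choose n \<le> Suc (2*n) choose n" by (rule choose_mono_Suc)
  moreover have "(2*n) choose n \<le> Suc (2*n) choose Suc n" by simp
  ultimately show ?case using e Suc by simp
qed

lemma words_finite: "finite (words q n)"
  using finite_lists_length_eq[of "{0..<q}" n] unfolding words_def by (simp add: conj_commute)

lemma words_card: "card (words q n) = q ^ n"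
  using card_lists_length_eq[of "{0..<q}" n] unfolding words_def by (simp add: conj_commute)

lemma subseq_set: assumes "subseq z c" shows "set z \<subseteq> set c"
proof
  fix x assume "x \<in> set z"
  with assms obtain y where "y \<in> set c" "x = y" by (rule list_emb_set)
  then show "x \<in> set c" by simp
qed

lemma subseqs_finite: "finite {z. length z = m \<and> subseq z c}"
  by (rule finite_subset[OF _ finite_lists_length_eq[of "set c" m]]) (auto dest: subseq_set)

lemma subseqs_card: "card {z. length z = m \<and> subseq z c} \<le> length c choose m"
proof (induction c arbitrary: m)
  case Nil
  show ?case
  proof (cases m)
    case 0
    then have E: "{z. length z = m \<and> subseq z []} = {[]}" by auto
    show ?thesis unfolding E using 0 by simp
  next
    case (Suc k)
    then have E: "{z. length z = m \<and> subseq z []} = {}" by auto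
    show ?thesis unfolding E by simp
  qed
next
  case (Cons a c)
  show ?case
  proof (cases m)
    case 0
    then have "{z. length z = m \<and> subseq z (a # c)} = {[]}" by auto
    then show ?thesis using 0 by simp
  next
    case (Suc k)
    have "{z. length z = m \<and> subseq z (a # c)} \<subseteq>
       {z. length z = m \<and> subseq z c} \<union> Cons a ` {z. length z = k \<and> subseq z c}"
    proof
      fix z assume "z \<in> {z. length z = m \<and> subseq z (a # c)}"
      then obtain x zs where z: "z = x # zs" "length zs = k" "subseq (x # zs) (a # c)"
        using Suc by (cases z) auto
      then show "z \<in> {z. length z = m \<and> subseq z c} \<union> Cons a ` {z. length z = k \<and> subseq z c}"
        using Suc by (auto split: if_splits)
    qed
    then have "card {z. length z = m \<and> subseq z (a # c)} \<le>
       card ({z. length z = m \<and> subseq z c} \<union> Cons a ` {z. length z = k \<and> subseq z c})"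
      by (intro card_mono finite_UnI finite_imageI subseqs_finite)
    also have "\<dots> \<le> card {z. length z = m \<and> subseq z c} + card (Cons a ` {z. length z = k \<and> subseq z c})"
      by (rule card_Un_le)
    also have "\<dots> \<le> (length c choose m) + (length c choose k)"
      using Cons.IH[of m] Cons.IH[of k] card_image_le[OF subseqs_finite, of "Cons a" k c] by linarith
    also have "\<dots> = length (a # c) choose m" using Suc by simp
    finally show ?thesis .
  qed
qed

lemma words_Suc: "words q (Suc n) = (\<Union>c\<in>{0..<q}. Cons c ` words q n)"
  by (auto simp: words_def length_Suc_conv)

lemma pow_le_central:
  assumes "q \<ge> (2::nat)"
  shows "q ^ n \<le> ((2 * n) choose n) * (q - 1) ^ n"
proof -
  have "q ^ n \<le> (2 * (q - 1)) ^ n" using assms by (intro power_mono) auto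
  also have "\<dots> = 2 ^ n * (q - 1) ^ n" by (simp add: power_mult_distrib)
  also have "\<dots> \<le> ((2 * n) choose n) * (q - 1) ^ n" by (intro mult_right_mono central_ge) auto
  finally show ?thesis .
qed

lemma super_card:
  assumes q: "q \<ge> 2"
  shows "set z \<subseteq> {0..<q} \<Longrightarrow> length z + t = n \<Longrightarrow>
    card {y. y \<in> words q n \<and> subseq z y} \<le> ((n + t) choose t) * (q - 1) ^ t"
proof (induction n arbitrary: z t)
  case 0
  have "card {y. y \<in> words q 0 \<and> subseq z y} \<le> card (words q 0)"
    by (intro card_mono words_finite) auto
  also have "\<dots> = 1" by (simp add: words_card)
  finally show ?case using 0 by simp
next
  case (Suc n)
  show ?case
  proof (cases z)
    case Nil
    have "card {y. y \<in> words q (Suc n) \<and> subseq z y} \<le> card (words q (Suc n))"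
      by (intro card_mono words_finite) auto
    also have "\<dots> = q ^ Suc n" by (simp add: words_card)
    also have "\<dots> \<le> ((2 * Suc n) choose Suc n) * (q - 1) ^ Suc n" by (rule pow_le_central[OF q])
    finally show ?thesis using Nil Suc.prems by (simp add: mult_2)
  next
    case (Cons a z')
    have a: "a < q" and z': "set z' \<subseteq> {0..<q}" using Suc.prems Cons by auto
    define S where "S = (\<lambda>w. {y. y \<in> words q n \<and> subseq w y})"
    have fin: "finite (S w)" for w unfolding S_def by (rule finite_subset[OF _ words_finite]) auto
    have sub: "{y. y \<in> words q (Suc n) \<and> subseq z y} \<subseteq>
       Cons a ` S z' \<union> (\<Union>c\<in>{0..<q}-{a}. Cons c ` S z)"
    proof
      fix y assume "y \<in> {y. y \<in> words q (Suc n) \<and> subseq z y}"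
      then obtain c y' where y: "y = c # y'" "c < q" "y' \<in> words q n" "subseq (a # z') (c # y')"
        using Cons unfolding words_Suc by auto
      show "y \<in> Cons a ` S z' \<union> (\<Union>c\<in>{0..<q}-{a}. Cons c ` S z)"
      proof (cases "c = a")
        case True
        then show ?thesis using y unfolding S_def by auto
      next
        case False
        then show ?thesis using y Cons unfolding S_def by auto
      qed
    qed
    have "card {y. y \<in> words q (Suc n) \<and> subseq z y} \<le>
       card (Cons a ` S z' \<union> (\<Union>c\<in>{0..<q}-{a}. Cons c ` S z))"
      using sub fin by (intro card_mono) auto
    also have "\<dots> \<le> card (Cons a ` S z') + card (\<Union>c\<in>{0..<q}-{a}. Cons c ` S z)"
      by (rule card_Un_le)
    also have "\<dots> \<le> card (S z') + (\<Sum>c\<in>{0..<q}-{a}. card (Cons c ` S z))"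
      by (intro add_mono card_image_le fin card_UN_le) auto
    also have "\<dots> = card (S z') + (q - 1) * card (S z)"
      using a by (simp add: card_image)
    finally have main: "card {y. y \<in> words q (Suc n) \<and> subseq z y} \<le> card (S z') + (q - 1) * card (S z)" .
    have IH1: "card (S z') \<le> ((n + t) choose t) * (q - 1) ^ t"
      unfolding S_def using Suc.IH[OF z'] Suc.prems Cons by simp
    show ?thesis
    proof (cases t)
      case 0
      have "S z = {}" unfolding S_def words_def using Suc.prems Cons 0
        by (auto dest: list_emb_length)
      then show ?thesis using main IH1 0 by simp
    next
      case (Suc s)
      have IH2: "card (S z) \<le> ((n + s) choose s) * (q - 1) ^ s"
        unfolding S_def using Suc.IH[OF Suc.prems(1), of s] Suc.prems Cons \<open>t = Suc s\<close> by simp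
      have "card {y. y \<in> words q (Suc n) \<and> subseq z y} \<le>
          ((n + t) choose t) * (q - 1) ^ t + (q - 1) * (((n + s) choose s) * (q - 1) ^ s)"
      proof -
        have "(q - 1) * card (S z) \<le> (q - 1) * (((n + s) choose s) * (q - 1) ^ s)"
          using IH2 by (rule mult_left_mono) simp
        then show ?thesis using main IH1 by linarith
      qed
      also have "\<dots> = (((n + t) choose t) + ((n + s) choose s)) * (q - 1) ^ t"
        using Suc by (simp add: algebra_simps)
      also have "\<dots> \<le> ((Suc n + t) choose t) * (q - 1) ^ t"
      proof (intro mult_right_mono)
        have "(n + s) choose s \<le> Suc (n + s) choose s" by (rule choose_mono_Suc)
        then show "((n + t) choose t) + ((n + s) choose s) \<le> (Suc n + t) choose t"
          using Suc by simp
      qed auto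
      finally show ?thesis .
    qed
  qed
qed

lemma key_arith:
  assumes "real k < 2 * \<delta> * real n" "2 * n \<le> 2 * l + k"
  shows "n \<le> l + nat (\<lceil>\<delta> * real n\<rceil> - 1)"
proof (cases "n \<le> l")
  case True then show ?thesis by simp
next
  case False
  have "real (n - l) < \<delta> * real n" using assms False by (simp add: of_nat_diff)
  then have "int (n - l) < \<lceil>\<delta> * real n\<rceil>" by (simp add: less_ceiling_iff)
  then have "n - l \<le> nat (\<lceil>\<delta> * real n\<rceil> - 1)" by linarith
  then show ?thesis by linarith
qed

lemma near_cover:
  assumes "set a \<subseteq> {0..<q}" "set b \<subseteq> {0..<q}" "length a = n" "length b = n"
    "real (insdel_dist q a b) < 2 * \<delta> * real n"
  shows "\<exists>z. length z = n - nat (\<lceil>\<delta> * real n\<rceil> - 1) \<and> subseq z a \<and> subseq z b"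
proof -
  obtain z where z: "subseq z a" "subseq z b" "length a + length b \<le> 2 * length z + insdel_dist q a b"
    using path_subseq[OF dist_path[OF assms(1,2)]] by blast
  have len: "n \<le> length z + nat (\<lceil>\<delta> * real n\<rceil> - 1)"
    using key_arith[OF assms(5)] z(3) assms(3,4) by simp
  have lz: "length z \<le> n" using z(1) assms(3) list_emb_length by blast
  let ?z = "take (n - nat (\<lceil>\<delta> * real n\<rceil> - 1)) z"
  have "subseq ?z z" by (rule prefix_imp_subseq[OF take_is_prefix])
  then show ?thesis using z len lz
    by (intro exI[of _ ?z]) (auto intro: subseq_order.order_trans)
qed

lemma gv:
  assumes q: "q \<ge> 2" and tdef: "t = nat (\<lceil>\<delta> * real n\<rceil> - 1)" and dl: "0 < \<delta>" "\<delta> < 1"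
  shows "q ^ n \<le> A_q q n (2 * \<delta> * real n) * ((n choose t) * (((n + t) choose t) * (q - 1) ^ t))"
proof -
  define d where "d = 2 * \<delta> * real n"
  define codes where "codes = {C. C \<subseteq> words q n \<and> min_dist_ge q C d}"
  have fin: "finite codes" unfolding codes_def
    by (rule finite_subset[of _ "Pow (words q n)"]) (auto simp: words_finite)
  have ne: "{} \<in> codes" unfolding codes_def min_dist_ge_def by auto
  have eqs: "{card C | C. C \<subseteq> words q n \<and> min_dist_ge q C d} = card ` codes"
    unfolding codes_def by auto
  have Aeq: "A_q q n d = Max (card ` codes)"
    unfolding A_q_def eqs using fin ne by (intro cSup_eq_Max) auto
  obtain C0 where C0: "C0 \<in> codes" "card C0 = A_q q n d"
  proof -
    have "Max (card ` codes) \<in> card ` codes" using fin ne by (intro Max_in) auto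
    then show ?thesis using that unfolding Aeq by auto
  qed
  have le: "card C \<le> A_q q n d" if "C \<in> codes" for C
    unfolding Aeq using fin that by (intro Max_ge) auto
  have C0w: "C0 \<subseteq> words q n" and C0d: "min_dist_ge q C0 d" using C0(1) unfolding codes_def by auto
  have finC0: "finite C0" using C0w words_finite finite_subset by blast
  have tn: "t \<le> n"
  proof -
    have "\<delta> * real n \<le> real n" using dl by (intro mult_left_le_one_le) auto
    then have "\<lceil>\<delta> * real n\<rceil> \<le> int n" by (simp add: ceiling_le_iff)
    then show ?thesis unfolding tdef by linarith
  qed
  define Z where "Z = (\<lambda>c::nat list. {z. length z = n - t \<and> subseq z c})"
  define S where "S = (\<lambda>w. {y. y \<in> words q n \<and> subseq w y})"
  have cover: "\<exists>c\<in>C0. \<exists>z. length z = n - t \<and> subseq z c \<and> subseq z w" if w: "w \<in> words q n" for w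
  proof (rule ccontr)
    assume nc: "\<not> ?thesis"
    have wn: "set w \<subseteq> {0..<q}" "length w = n" using w unfolding words_def by auto
    have "w \<notin> C0"
    proof
      assume "w \<in> C0"
      moreover have "subseq (take (n - t) w) w" by (rule prefix_imp_subseq[OF take_is_prefix])
      moreover have "length (take (n - t) w) = n - t" using wn by simp
      ultimately show False using nc by blast
    qed
    have far1: "d \<le> real (insdel_dist q c w)" if "c \<in> C0" for c
    proof (rule ccontr)
      assume "\<not> ?thesis"
      moreover have "set c \<subseteq> {0..<q}" "length c = n" using that C0w unfolding words_def by auto
      ultimately show False using near_cover[of c q w n \<delta>] wn nc that unfolding d_def tdef[symmetric] by auto
    qed
    have far2: "d \<le> real (insdel_dist q w c)" if "c \<in> C0" for c
    proof (rule ccontr)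
      assume "\<not> ?thesis"
      moreover have "set c \<subseteq> {0..<q}" "length c = n" using that C0w unfolding words_def by auto
      ultimately show False using near_cover[of w q c n \<delta>] wn nc that unfolding d_def tdef[symmetric] by auto
    qed
    have "insert w C0 \<in> codes" unfolding codes_def min_dist_ge_def
      using C0w w C0d far1 far2 unfolding min_dist_ge_def by auto
    then have "card (insert w C0) \<le> A_q q n d" by (rule le)
    then show False using C0(2) finC0 \<open>w \<notin> C0\<close> by simp
  qed
  have "words q n \<subseteq> (\<Union>c\<in>C0. \<Union>z\<in>Z c. S z)"
    unfolding Z_def S_def using cover by blast
  then have "q ^ n \<le> card (\<Union>c\<in>C0. \<Union>z\<in>Z c. S z)"
    unfolding words_card[symmetric]
    by (intro card_mono finite_UN_I finC0) (auto simp: Z_def S_def subseqs_finite words_finite)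
  also have "\<dots> \<le> (\<Sum>c\<in>C0. card (\<Union>z\<in>Z c. S z))" by (rule card_UN_le[OF finC0])
  also have "\<dots> \<le> (\<Sum>c\<in>C0. \<Sum>z\<in>Z c. card (S z))"
    by (intro sum_mono card_UN_le) (auto simp: Z_def subseqs_finite)
  also have "\<dots> \<le> (\<Sum>c\<in>C0. \<Sum>z\<in>Z c. ((n + t) choose t) * (q - 1) ^ t)"
  proof (intro sum_mono)
    fix c z assume c: "c \<in> C0" and z: "z \<in> Z c"
    have "set c \<subseteq> {0..<q}" using c C0w unfolding words_def by auto
    then have "set z \<subseteq> {0..<q}" using z subseq_set unfolding Z_def by blast
    moreover have "length z + t = n" using z tn unfolding Z_def by auto
    ultimately show "card (S z) \<le> ((n + t) choose t) * (q - 1) ^ t"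
      unfolding S_def by (rule super_card[OF q])
  qed
  also have "\<dots> = (\<Sum>c\<in>C0. card (Z c) * (((n + t) choose t) * (q - 1) ^ t))" by simp
  also have "\<dots> \<le> (\<Sum>c\<in>C0. (n choose t) * (((n + t) choose t) * (q - 1) ^ t))"
  proof (intro sum_mono mult_right_mono)
    fix c assume c: "c \<in> C0"
    then have "length c = n" using C0w unfolding words_def by auto
    then have "card (Z c) \<le> n choose (n - t)" unfolding Z_def using subseqs_card[of "n - t" c] by simp
    also have "\<dots> = n choose t" using tn by (simp add: binomial_symmetric[symmetric])
    finally show "card (Z c) \<le> n choose t" .
  qed auto
  also have "\<dots> = card C0 * ((n choose t) * (((n + t) choose t) * (q - 1) ^ t))" by simp
  finally show ?thesis using C0(2) unfolding d_def by simp
qed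

lemma binom_term_le:
  assumes p: "0 < p" "p < (1::real)" and k: "k \<le> N"
  shows "real (N choose k) * p ^ k * (1 - p) ^ (N - k) \<le> 1"
proof -
  have "real (N choose k) * p ^ k * (1 - p) ^ (N - k) \<le> (\<Sum>j\<le>N. real (N choose j) * p ^ j * (1 - p) ^ (N - j))"
    using k p by (intro member_le_sum) auto
  also have "\<dots> = (p + (1 - p)) ^ N" by (rule binomial_ring[symmetric])
  finally show ?thesis by simp
qed

lemma ln_binom_le:
  assumes p: "0 < p" "p < (1::real)" and k: "k \<le> N"
  shows "ln (real (N choose k)) \<le> - (real k * ln p) - real (N - k) * ln (1 - p)"
proof -
  have pos: "real (N choose k) > 0" using k by simp
  have "ln (real (N choose k) * p ^ k * (1 - p) ^ (N - k)) \<le> ln 1"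
    using binom_term_le[OF p k] pos p by (subst ln_le_cancel_iff) auto
  also have "ln (real (N choose k) * p ^ k * (1 - p) ^ (N - k)) =
      ln (real (N choose k)) + real k * ln p + real (N - k) * ln (1 - p)"
    using pos p by (simp add: ln_mult ln_realpow)
  finally show ?thesis by simp
qed

lemma main_bound:
  assumes q: "q \<ge> 2" and dl: "0 < \<delta>" "\<delta> < 1" and n: "n \<ge> 1"
  defines "la \<equiv> ln (real q - 1) + ln (1 + \<delta>) + ln (1 - \<delta>) - 2 * ln \<delta>"
  defines "lb \<equiv> ln (1 + \<delta>) - ln (1 - \<delta>)"
  shows "1 - (\<delta> * la + lb) / ln q - \<bar>la\<bar> / (ln q * real n)
     \<le> log q (real (A_q q n (2 * \<delta> * real n))) / real n"
proof -
  define t where "t = nat (\<lceil>\<delta> * real n\<rceil> - 1)"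
  define A where "A = real (A_q q n (2 * \<delta> * real n))"
  define C1 where "C1 = real (n choose t)"
  define C2 where "C2 = real ((n + t) choose t)"
  have tn: "t \<le> n"
  proof -
    have "\<delta> * real n \<le> real n" using dl by (intro mult_left_le_one_le) auto
    then have "\<lceil>\<delta> * real n\<rceil> \<le> int n" by (simp add: ceiling_le_iff)
    then show ?thesis unfolding t_def by linarith
  qed
  have t1: "real t \<le> \<delta> * real n" and t2: "\<delta> * real n - 1 \<le> real t"
  proof -
    have "0 < \<delta> * real n" using dl n by simp
    then have c1: "1 \<le> \<lceil>\<delta> * real n\<rceil>" by (simp add: le_ceiling_iff)  
    then have rt: "real t = real_of_int \<lceil>\<delta> * real n\<rceil> - 1" unfolding t_def by simp
    show "real t \<le> \<delta> * real n" unfolding rt using ceiling_less_cancel ceiling_correct by linarith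
    show "\<delta> * real n - 1 \<le> real t" unfolding rt by linarith
  qed
  have q1: "real q - 1 \<ge> 1" using q by simp
  have C1pos: "C1 > 0" unfolding C1_def using tn by simp
  have C2pos: "C2 > 0" unfolding C2_def by simp
  have gvr: "real q ^ n \<le> A * (C1 * (C2 * (real q - 1) ^ t))"
  proof -
    have g: "q ^ n \<le> A_q q n (2 * \<delta> * real n) * ((n choose t) * (((n + t) choose t) * (q - 1) ^ t))"
      using gv[OF q t_def dl] .
    then have "real (q ^ n) \<le> real (A_q q n (2 * \<delta> * real n) * ((n choose t) * (((n + t) choose t) * (q - 1) ^ t)))"
      by (simp only: of_nat_le_iff)
    then show ?thesis unfolding A_def C1_def C2_def using q by (simp add: of_nat_diff)
  qed
  have Bpos: "C1 * (C2 * (real q - 1) ^ t) > 0" using C1pos C2pos q1 by simp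
  have "real q ^ n > 0" using q by simp
  then have Apos: "A > 0" using gvr Bpos by (metis less_le_trans zero_less_mult_pos2 not_le mult_nonpos_nonneg less_le)
  have "ln (real q ^ n) \<le> ln (A * (C1 * (C2 * (real q - 1) ^ t)))"
    using gvr \<open>real q ^ n > 0\<close> Apos Bpos by (subst ln_le_cancel_iff) auto
  then have main: "real n * ln q \<le> ln A + ln C1 + ln C2 + real t * ln (real q - 1)"
    using Apos C1pos C2pos q1 by (simp add: ln_mult ln_realpow)
  have b1: "ln C1 \<le> - (real t * ln \<delta>) - real (n - t) * ln (1 - \<delta>)"
    unfolding C1_def using ln_binom_le[OF dl tn] .
  have pp: "0 < \<delta> / (1 + \<delta>)" "\<delta> / (1 + \<delta>) < 1" using dl by auto
  have b2: "ln C2 \<le> - (real t * ln (\<delta> / (1 + \<delta>))) - real (n + t - t) * ln (1 - \<delta> / (1 + \<delta>))"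
    unfolding C2_def using ln_binom_le[OF pp, of t "n + t"] by simp
  have e1: "ln (\<delta> / (1 + \<delta>)) = ln \<delta> - ln (1 + \<delta>)" using dl by (simp add: ln_div)
  have e2: "1 - \<delta> / (1 + \<delta>) = 1 / (1 + \<delta>)" using dl by (simp add: field_simps)
  have e3: "ln (1 / (1 + \<delta>)) = - ln (1 + \<delta>)" using dl by (simp add: ln_div)
  have rnt: "real (n - t) = real n - real t" using tn by simp
  have lnB: "ln C1 + ln C2 + real t * ln (real q - 1) \<le> real t * la + real n * lb"
    using b1 b2 unfolding e1 e2 e3 rnt la_def lb_def by (simp add: algebra_simps)
  have tla: "real t * la \<le> \<delta> * real n * la + \<bar>la\<bar>"
  proof -
    have "\<bar>real t - \<delta> * real n\<bar> \<le> 1" using t1 t2 by linarith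
    then have "\<bar>(real t - \<delta> * real n) * la\<bar> \<le> \<bar>la\<bar>"
      by (simp add: abs_mult mult_left_le_one_le)
    then show ?thesis by (simp add: algebra_simps abs_le_iff)
  qed
  have lnA: "real n * ln q - \<delta> * real n * la - real n * lb - \<bar>la\<bar> \<le> ln A"
    using main lnB tla by linarith
  have lq: "ln (real q) > 0" using q by simp
  have np: "real n > 0" using n by simp
  have "1 - (\<delta> * la + lb) / ln q - \<bar>la\<bar> / (ln q * real n)
      = (real n * ln q - \<delta> * real n * la - real n * lb - \<bar>la\<bar>) / (ln q * real n)"
    using lq np by (simp add: field_simps)
  also have "\<dots> \<le> ln A / (ln q * real n)"
    using lnA lq np by (intro divide_right_mono) auto
  also have "\<dots> = log q A / real n" by (simp add: log_def)
  finally show ?thesis unfolding A_def .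
qed

theorem mainTheorem17:
  fixes q :: nat and \<delta> :: real
  assumes "q \<ge> 2" and "0 < \<delta>" and "\<delta> \<le> (real q - 1) / real q"
  shows "liminf (\<lambda>n. ereal (log q (real (A_q q n (2 * \<delta> * real n))) / real n))
     \<ge> ereal (1 - (1 + \<delta>) * H_q q (\<delta> / (1 + \<delta>)) + \<delta> * log q (real q - 1) - H_q q \<delta>)"
proof -
  have q: "q \<ge> 2" and d0: "0 < \<delta>" using assms by auto
  have d1: "\<delta> < 1"
  proof -
    have "(real q - 1) / real q < 1" using q by (simp add: field_simps)
    then show ?thesis using assms(3) by linarith
  qed
  define la where "la = ln (real q - 1) + ln (1 + \<delta>) + ln (1 - \<delta>) - 2 * ln \<delta>"
  define lb where "lb = ln (1 + \<delta>) - ln (1 - \<delta>)"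
  define L where "L = 1 - (\<delta> * la + lb) / ln q"
  have lq: "ln (real q) > 0" using q by simp
  have pp: "0 < \<delta> / (1 + \<delta>)" "\<delta> / (1 + \<delta>) < 1" using d0 by auto
  have e1: "ln (\<delta> / (1 + \<delta>)) = ln \<delta> - ln (1 + \<delta>)" using d0 by (simp add: ln_div)
  have e2: "1 - \<delta> / (1 + \<delta>) = 1 / (1 + \<delta>)" using d0 by (simp add: field_simps)
  have e3: "ln (1 / (1 + \<delta>)) = - ln (1 + \<delta>)" using d0 by (simp add: ln_div)
  have "ln q + \<delta> * ln q > 0" using lq d0 by (simp add: add_pos_pos)
  define p where "p = \<delta> / (1 + \<delta>)"
  have p1: "(1 + \<delta>) * p = \<delta>" unfolding p_def using d0 by simp
  have p2: "(1 + \<delta>) * (1 - p) = 1" unfolding p_def using d0 by (simp add: field_simps)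
  have lp: "ln p = ln \<delta> - ln (1 + \<delta>)" unfolding p_def using e1 .
  have l1p: "ln (1 - p) = - ln (1 + \<delta>)" unfolding p_def using e2 e3 by simp
  have H0: "H_q q p = (p * ln (real q - 1) - p * ln p - (1 - p) * ln (1 - p)) / ln q"
    unfolding H_q_def using pp unfolding p_def[symmetric] by (simp add: log_def diff_divide_distrib)
  have "(1 + \<delta>) * (p * ln (real q - 1) - p * ln p - (1 - p) * ln (1 - p))
      = ((1 + \<delta>) * p) * ln (real q - 1) - ((1 + \<delta>) * p) * ln p - ((1 + \<delta>) * (1 - p)) * ln (1 - p)"
    by (simp add: algebra_simps)
  also have "\<dots> = \<delta> * ln (real q - 1) - \<delta> * (ln \<delta> - ln (1 + \<delta>)) + ln (1 + \<delta>)"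
    unfolding p1 p2 lp l1p by simp
  finally have H1: "(1 + \<delta>) * H_q q (\<delta> / (1 + \<delta>)) = (\<delta> * ln (real q - 1) - \<delta> * (ln \<delta> - ln (1 + \<delta>)) + ln (1 + \<delta>)) / ln q"
    unfolding p_def[symmetric] H0 by simp
  have H2: "H_q q \<delta> = (\<delta> * ln (real q - 1) - \<delta> * ln \<delta> - (1 - \<delta>) * ln (1 - \<delta>)) / ln q"
    unfolding H_q_def using d0 d1 by (simp add: log_def diff_divide_distrib)
  have RHS: "1 - (1 + \<delta>) * H_q q (\<delta> / (1 + \<delta>)) + \<delta> * log q (real q - 1) - H_q q \<delta> = L"
    unfolding H1 H2 L_def la_def lb_def log_def using lq d0 by (simp add: field_simps)
  define c where "c = \<bar>la\<bar> / ln q"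
  have ev: "eventually (\<lambda>n. ereal (L - c / real n) \<le>
      ereal (log q (real (A_q q n (2 * \<delta> * real n))) / real n)) sequentially"
    using eventually_ge_at_top[of "1::nat"]
  proof eventually_elim
    case (elim n)
    have "L - c / real n = 1 - (\<delta> * la + lb) / ln q - \<bar>la\<bar> / (ln q * real n)"
      unfolding L_def c_def by simp
    then show ?case using main_bound[OF q d0 d1 elim] unfolding la_def lb_def by simp
  qed
  have lim: "(\<lambda>n. ereal (L - c / real n)) \<longlonglongrightarrow> ereal L"
    unfolding lim_ereal by (intro tendsto_eq_intros lim_const_over_n) auto
  have "ereal L = liminf (\<lambda>n. ereal (L - c / real n))"
    using lim_imp_Liminf[OF _ lim] by simp
  also have "\<dots> \<le> liminf (\<lambda>n. ereal (log q (real (A_q q n (2 * \<delta> * real n))) / real n))"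
    by (rule Liminf_mono[OF ev])
  finally show ?thesis unfolding RHS .
qed

end
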